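(* Let $n\ge1$, $m>1$, $a\in\mathbb{R}^n$, $d\in\mathbb{R}^m$ with $\|d\|\ge\|a\|$, and $S_{\le0}=\{(x,y)\in\mathbb{R}^{n+m}:\|x\|\le\|y\|,\ a^\mathsf{T} x+d^\mathsf{T} y\le0\}$. Let $(\bar x,\bar y)\notin S_{\le0}$ satisfy $a^\mathsf{T}\bar x+d^\mathsf{T}\bar y\le0$ and let $\lambda=\bar x/\|\bar x\|$. Define $G(\lambda)=\{\beta\in\mathbb{R}^m:\|\beta\|=1,\ a^\mathsf{T}\lambda+d^\mathsf{T}\beta\le0\}$ and $C_{G(\lambda)}=\{(x,y):-\lambda^\mathsf{T} x+\beta^\mathsf{T} y\le0\ \forall\beta\in G(\lambda)\}$. Then $C_{G(\lambda)}$ is maximal $S_{\le0}$-free and contains $(\bar x,\bar y)$ in its interior.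
   Context: $\|\cdot\|$ is the Euclidean norm. A convex set $C$ is $S$-free if $\operatorname{int}(C)\cap S=\emptyset$, and maximal $S$-free if it is $S$-free and no $S$-free convex set strictly contains it. (Note $(\bar x,\bar y)\notin S_{\le0}$ together with the linear inequality means $\|\bar x\|>\|\bar y\|$.) *)

theory Defs
  imports "HOL-Analysis.Analysis"
begin

text \<open>R^{n+m} is rendered as the product type real^'n \<times> real^'m (Euclidean norm on pairs).\<close>

definition S_free :: "('a::real_normed_vector) set \<Rightarrow> 'a set \<Rightarrow> bool" where
  "S_free S C \<longleftrightarrow> convex C \<and> interior C \<inter> S = {}"

definition maximal_S_free :: "('a::real_normed_vector) set \<Rightarrow> 'a set \<Rightarrow> bool" where
  "maximal_S_free S C \<longleftrightarrow> S_free S C \<and> (\<forall>C'. S_free S C' \<and> C \<subseteq> C' \<longrightarrow> C' = C)"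

definition S_le0 :: "real^'n \<Rightarrow> real^'m \<Rightarrow> ((real^'n) \<times> (real^'m)) set" where
  "S_le0 a d = {(x, y). norm x \<le> norm y \<and> a \<bullet> x + d \<bullet> y \<le> 0}"

definition G_set :: "real^'n \<Rightarrow> real^'m \<Rightarrow> real^'n \<Rightarrow> (real^'m) set" where
  "G_set a d lam = {\<beta>. norm \<beta> = 1 \<and> a \<bullet> lam + d \<bullet> \<beta> \<le> 0}"

definition C_G :: "real^'n \<Rightarrow> (real^'m) set \<Rightarrow> ((real^'n) \<times> (real^'m)) set" where
  "C_G lam G = {(x, y). \<forall>\<beta>\<in>G. - (lam \<bullet> x) + \<beta> \<bullet> y \<le> 0}"

end

theory Submission
  imports Defs
begin

lemma alg_norm:
  fixes c p s w q r kk :: real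
  assumes w0: "w \<ge> 0" and w2: "w^2 = 1 - c^2" and q0: "q \<ge> 0" and q2: "q^2 = 1 - p^2"
    and r0: "r \<ge> 0" and r2: "r^2 = 1 - s^2" and hk: "p - c * s \<le> kk" and k0: "kk \<ge> 0"
    and kw: "kk \<le> w*r" and pc: "p > c"
  shows "s \<le> c*p + w*q"
proof (cases "s \<le> c*p")
  case True then show ?thesis using w0 q0 by (smt (verit) mult_nonneg_nonneg)
next
  case False
  have s1: "s^2 \<le> 1" using r2 by (smt (verit) zero_le_power2)
  have c1: "c^2 \<le> 1" using w2 by (smt (verit) zero_le_power2)
  have p1: "p^2 \<le> 1" using q2 by (smt (verit) zero_le_power2)
  have key: "(s - c*p)^2 \<le> (w*q)^2"
  proof (cases "p - c * s \<ge> 0")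
    case True
    have "(p - c * s)^2 \<le> (w*r)^2"
      using True hk kw k0 by (meson order_trans power_mono)
    moreover have "(s - c*p)^2 - (w*q)^2 = (p - c * s)^2 - (w*r)^2"
      by (simp only: power_mult_distrib w2 q2 r2) (simp add: power2_eq_square algebra_simps)
    ultimately show ?thesis by linarith
  next
    case F2: False
    have sle: "s \<le> 1" using s1 by (metis abs_le_D1 abs_square_le_1)
    have cneg: "c < 0"
    proof (rule ccontr)
      assume "\<not> c < 0"
      hence "c * s \<le> c" using sle by (simp add: mult_left_le)
      thus False using F2 pc by linarith
    qed
    have "c * s < c*(c*p)" using False cneg by (simp add: mult_less_cancel_left)
    hence "p < c^2 * p" using F2 by (simp add: power2_eq_square)
    hence pm: "p * (1 - c^2) < 0" by (simp add: algebra_simps)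
    have pneg: "p < 0"
    proof (rule ccontr)
      assume "\<not> p < 0"
      hence "p * (1 - c^2) \<ge> 0" using c1 by simp
      thus False using pm by linarith
    qed
    have A: "- c*(s - c*p) < - p*(1 - c^2)"
      using F2 by (simp add: power2_eq_square algebra_simps)
    have A0: "0 \<le> - c*(s - c*p)" using False cneg by (simp add: mult_nonpos_nonneg)
    have B: "(- c*(s - c*p))^2 \<le> (- p*(1 - c^2))^2"
      using A A0 by (intro power_mono) linarith+
    have pc2: "p^2 \<le> c^2" proof -
      have "(-p)^2 \<le> (-c)^2" by (rule power_mono) (use pc pneg in linarith)+
      thus ?thesis by simp
    qed
    have C: "p^2 * (1 - c^2) \<le> c^2 * (1 - p^2)" using pc2 by (simp add: algebra_simps)
    have "c^2 * (s - c*p)^2 \<le> c^2 * ((1 - c^2) * (1 - p^2))"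
    proof -
      have "c^2 * (s - c*p)^2 = (- c*(s - c*p))^2" by (simp add: power_mult_distrib)
      also have "\<dots> \<le> (- p*(1 - c^2))^2" by (rule B)
      also have "\<dots> = (1 - c^2) * (p^2 * (1 - c^2))" by (simp add: power_mult_distrib power2_eq_square)
      also have "\<dots> \<le> (1 - c^2) * (c^2 * (1 - p^2))" using C c1 by (simp add: mult_left_mono)
      finally show ?thesis by (simp add: ac_simps)
    qed
    hence "(s - c*p)^2 \<le> (1 - c^2) * (1 - p^2)" using cneg by simp
    thus ?thesis by (simp add: power_mult_distrib w2 q2)
  qed
  have "s - c*p \<le> w*q" using key w0 q0 by (meson mult_nonneg_nonneg power2_le_imp_le)
  thus ?thesis by simp
qed

lemma alg_hom:
  fixes D Y W Q P c t K :: real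
  assumes D0: "D > 0" and Y0: "Y > 0" and W0: "W \<ge> 0" and W2: "W^2 = D^2 - c^2"
    and Q0: "Q \<ge> 0" and Q2: "Q^2 = Y^2 - P^2 / D^2" and tY: "t^2 \<le> Y^2"
    and PK: "P - c * t \<le> K" and K0: "K \<ge> 0" and KW: "K \<le> W * sqrt (Y^2 - t^2)"
    and Pc: "P > c * Y"
  shows "t \<le> c * P / D^2 + W * Q / D"
proof -
  define r where "r = sqrt (1 - (t/Y)^2)"
  have r0: "r \<ge> 0" unfolding r_def using tY Y0
    by (simp add: power_divide divide_le_eq_1)
  have r2: "r^2 = 1 - (t/Y)^2" unfolding r_def using tY Y0
    by (simp add: power_divide divide_le_eq_1)
  have sq: "sqrt (Y^2 - t^2) = Y * r"
  proof -
    have "Y^2 - t^2 = Y^2 * (1 - (t/Y)^2)" using Y0 by (simp add: field_simps)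
    thus ?thesis unfolding r_def using Y0 by (simp add: real_sqrt_mult)
  qed
  have "t/Y \<le> (c/D) * (P/(D*Y)) + (W/D) * (Q/Y)"
  proof (rule alg_norm[where r = r and kk = "K/(D*Y)"])
    show "0 \<le> W/D" using W0 D0 by simp
    show "(W/D)^2 = 1 - (c/D)^2" using W2 D0 by (simp add: power_divide field_simps)
    show "0 \<le> Q/Y" using Q0 Y0 by simp
    show "(Q/Y)^2 = 1 - (P/(D*Y))^2" using Q2 D0 Y0 by (simp add: power_divide field_simps)
    show "0 \<le> r" by (rule r0)
    show "r^2 = 1 - (t/Y)^2" by (rule r2)
    show "P/(D*Y) - c/D * (t/Y) \<le> K/(D*Y)"
    proof -
      have e: "P/(D*Y) - c/D * (t/Y) = (P - c*t)/(D*Y)" using D0 Y0 by (simp add: field_simps)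
      show ?thesis unfolding e using PK D0 Y0 by (simp add: divide_right_mono)
    qed
    show "0 \<le> K/(D*Y)" using K0 D0 Y0 by simp
    show "K/(D*Y) \<le> W/D * r" using KW D0 Y0 unfolding sq by (simp add: field_simps)
    show "c/D < P/(D*Y)" using Pc D0 Y0 by (simp add: field_simps)
  qed
  hence "t \<le> ((c/D) * (P/(D*Y)) + (W/D) * (Q/Y)) * Y" using Y0 by (simp only: pos_divide_le_eq)
  moreover have "((c/D) * (P/(D*Y)) + (W/D) * (Q/Y)) * Y = c*P/D^2 + W*Q/D"
    using Y0 D0 by (simp add: field_simps power2_eq_square)
  ultimately show ?thesis by linarith
qed

lemma exists_beta:
  fixes a lam x :: "real^'n" and d y :: "real^'m"
  assumes m2: "CARD('m) \<ge> 2" and lam1: "norm lam = 1" and da: "norm a \<le> norm d"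
    and xy: "norm x \<le> norm y" and axdy: "a \<bullet> x + d \<bullet> y \<le> 0"
  shows "\<exists>\<beta>\<in>G_set a d lam. lam \<bullet> x \<le> \<beta> \<bullet> y"
proof -
  define c where "c = - (a \<bullet> lam)"
  define t where "t = lam \<bullet> x"
  define Y where "Y = norm y"
  define D where "D = norm d"
  have ca: "\<bar>c\<bar> \<le> norm a" unfolding c_def using Cauchy_Schwarz_ineq2[of a lam] lam1 by simp
  have tx: "\<bar>t\<bar> \<le> norm x" unfolding t_def using Cauchy_Schwarz_ineq2[of lam x] lam1 by simp
  show ?thesis
  proof (cases "y \<noteq> 0 \<and> d \<bullet> y \<le> c * Y")
    case True
    define \<beta> where "\<beta> = (1 / Y) *\<^sub>R y"
    have Y0: "Y > 0" using True unfolding Y_def by simp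
    have "norm \<beta> = 1" unfolding \<beta>_def Y_def using True by simp
    moreover have "a \<bullet> lam + d \<bullet> \<beta> \<le> 0"
    proof -
      have "d \<bullet> \<beta> = (d \<bullet> y) / Y" unfolding \<beta>_def by simp
      also have "\<dots> \<le> c" using True Y0 by (simp add: pos_divide_le_eq)
      finally show ?thesis unfolding c_def by simp
    qed
    moreover have "lam \<bullet> x \<le> \<beta> \<bullet> y"
    proof -
      have "\<beta> \<bullet> y = Y" unfolding \<beta>_def Y_def using True by (simp add: dot_square_norm power2_eq_square)
      thus ?thesis using tx xy unfolding t_def Y_def by linarith
    qed
    ultimately show ?thesis unfolding G_set_def by blast
  next
    case False
    show ?thesis
    proof (cases "d = 0")
      case True
      hence a0: "a = 0" using da by simp
      have y0: "y = 0" using False True by (simp add: c_def a0 Y_def)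
      hence x0: "x = 0" using xy by simp
      define \<beta> :: "real^'m" where "\<beta> = axis undefined 1"
      have "norm \<beta> = 1" unfolding \<beta>_def by simp
      thus ?thesis unfolding G_set_def using True a0 x0 y0 by auto
    next
      case dn0: False
      have D0: "D > 0" unfolding D_def using dn0 by simp
      show ?thesis
      proof (cases "y = 0")
        case True
        hence x0: "x = 0" using xy by simp
        define \<beta> where "\<beta> = - (1 / D) *\<^sub>R d"
        have "norm \<beta> = 1" unfolding \<beta>_def D_def using dn0 by simp
        moreover have "d \<bullet> \<beta> = - D" unfolding \<beta>_def D_def using dn0
          by (simp add: dot_square_norm power2_eq_square)
        moreover have "- c \<le> D" using ca da unfolding D_def by linarith
        ultimately show ?thesis unfolding G_set_def c_def using True x0 by auto
      next
        case yn0: False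
        have Y0: "Y > 0" using yn0 unfolding Y_def by simp
        define P where "P = d \<bullet> y"
        have Pc: "P > c * Y" using False yn0 unfolding P_def by simp
        define yp where "yp = y - (P / D^2) *\<^sub>R d"
        define Q where "Q = norm yp"
        have dd: "d \<bullet> d = D^2" unfolding D_def by (simp add: dot_square_norm)
        have ypd: "yp \<bullet> d = 0" unfolding yp_def P_def using D0 dd[symmetric]
          by (simp add: inner_diff_left inner_diff_right inner_commute)
        have ypy: "yp \<bullet> y = Q^2"
        proof -
          have "yp \<bullet> yp = yp \<bullet> y" unfolding yp_def
            by (simp add: inner_diff_right ypd[unfolded yp_def])
          thus ?thesis unfolding Q_def by (simp add: dot_square_norm)
        qed
        have Q2: "Q^2 = Y^2 - P^2 / D^2"
        proof -
          have "yp \<bullet> y = y \<bullet> y - (P / D^2) * (d \<bullet> y)" unfolding yp_def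
            by (simp add: inner_diff_left)
          also have "\<dots> = Y^2 - P^2 / D^2" unfolding Y_def P_def
            by (simp add: dot_square_norm power2_eq_square)
          finally have "yp \<bullet> y = Y^2 - P^2 / D^2" .
          thus ?thesis using ypy by simp
        qed
        obtain f where f1: "norm f = 1" and fd: "f \<bullet> d = 0" and fy: "f \<bullet> y = Q"
        proof (cases "yp = 0")
          case False
          define f where "f = (1 / Q) *\<^sub>R yp"
          have Qp: "Q > 0" unfolding Q_def using False by simp
          show ?thesis
          proof (rule that[of f])
            show "norm f = 1" unfolding f_def Q_def using False by simp
            show "f \<bullet> d = 0" unfolding f_def using ypd by simp
            show "f \<bullet> y = Q" unfolding f_def using ypy Qp by (simp add: power2_eq_square)
          qed
        next
          case True
          have "2 \<le> DIM(real^'m)" using m2 by simp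
          then obtain g :: "real^'m" where g0: "g \<noteq> 0" and og: "orthogonal d g"
            using orthogonal_to_vector_exists by blast
          define f where "f = (1 / norm g) *\<^sub>R g"
          have yd: "y = (P / D^2) *\<^sub>R d" using True unfolding yp_def by simp
          show ?thesis
          proof (rule that[of f])
            show "norm f = 1" unfolding f_def using g0 by simp
            show "f \<bullet> d = 0" unfolding f_def using og by (simp add: orthogonal_def inner_commute)
            show "f \<bullet> y = Q" unfolding f_def Q_def using og True
              by (subst yd) (simp add: orthogonal_def inner_commute)
          qed
        qed
        have c2: "c^2 \<le> D^2" using ca da unfolding D_def
          by (metis abs_ge_zero abs_le_square_iff order_trans abs_norm_cancel)
        define W where "W = sqrt (D^2 - c^2)"
        have W0: "W \<ge> 0" unfolding W_def using c2 by simp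
        have W2: "W^2 = D^2 - c^2" unfolding W_def using c2 by simp
        define \<beta> where "\<beta> = (c / D^2) *\<^sub>R d + (W / D) *\<^sub>R f"
        have bd: "d \<bullet> \<beta> = c" unfolding \<beta>_def using dd fd D0
          by (simp add: inner_add_right inner_commute)
        have bb: "\<beta> \<bullet> \<beta> = 1"
        proof -
          have ff: "f \<bullet> f = 1" using f1 by (simp add: dot_square_norm)
          have "\<beta> \<bullet> \<beta> = (c / D^2)^2 * (d \<bullet> d) + (W / D)^2 * (f \<bullet> f)"
            unfolding \<beta>_def using fd
            by (simp add: inner_add_left inner_add_right inner_commute power2_eq_square)
          also have "\<dots> = (c^2 + W^2) / D^2" using dd ff D0 by (simp add: power2_eq_square field_simps)
          also have "\<dots> = 1" using W2 D0 by simp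
          finally show ?thesis .
        qed
        have b1: "norm \<beta> = 1" using bb by (simp add: norm_eq_sqrt_inner)
        have by_: "\<beta> \<bullet> y = c * P / D^2 + W * Q / D" unfolding \<beta>_def P_def
          using fy by (simp add: inner_add_left)
        define ap where "ap = a + c *\<^sub>R lam"
        define xp where "xp = x - t *\<^sub>R lam"
        have ll: "lam \<bullet> lam = 1" using lam1 by (simp add: dot_square_norm)
        have apxp: "ap \<bullet> xp = a \<bullet> x + c * t" unfolding ap_def xp_def c_def t_def
          using ll by (simp add: inner_add_left inner_diff_right inner_commute algebra_simps)
        have apn: "norm ap ^2 = norm a ^2 - c^2"
        proof -
          have "norm ap^2 = ap \<bullet> ap" by (simp add: power2_norm_eq_inner)
          also have "\<dots> = a \<bullet> a + 2*c*(a \<bullet> lam) + c^2*(lam \<bullet> lam)" unfolding ap_def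
            by (simp add: inner_add_left inner_add_right inner_commute power2_eq_square algebra_simps)
          also have "\<dots> = norm a^2 - c^2" using ll by (simp add: c_def power2_norm_eq_inner[symmetric] power2_eq_square)
          finally show ?thesis .
        qed
        have xpn: "norm xp ^2 = norm x ^2 - t^2"
        proof -
          have "norm xp^2 = xp \<bullet> xp" by (simp add: power2_norm_eq_inner)
          also have "\<dots> = x \<bullet> x - 2*t*(lam \<bullet> x) + t^2*(lam \<bullet> lam)" unfolding xp_def
            by (simp add: inner_diff_left inner_diff_right inner_commute power2_eq_square algebra_simps)
          also have "\<dots> = norm x^2 - t^2" using ll by (simp add: t_def power2_norm_eq_inner[symmetric] power2_eq_square)
          finally show ?thesis .
        qed
        define K where "K = norm ap * norm xp"
        have PK: "P - c * t \<le> K"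
        proof -
          have "- (ap \<bullet> xp) \<le> K" unfolding K_def using Cauchy_Schwarz_ineq2[of ap xp] by linarith
          thus ?thesis using apxp axdy unfolding P_def by linarith
        qed
        have K0: "K \<ge> 0" unfolding K_def by simp
        have tY: "t^2 \<le> Y^2" using tx xy unfolding Y_def
          by (metis abs_le_square_iff abs_norm_cancel order_trans)
        have KW: "K \<le> W * sqrt (Y^2 - t^2)"
        proof -
          have "norm ap \<le> W" unfolding W_def using apn da
            by (metis D_def diff_right_mono norm_ge_zero power_mono real_le_rsqrt)
          moreover have "norm xp \<le> sqrt (Y^2 - t^2)" using xpn xy unfolding Y_def
            by (metis diff_right_mono norm_ge_zero power_mono real_le_rsqrt)
          ultimately show ?thesis unfolding K_def using W0 by (intro mult_mono) auto
        qed
        have "t \<le> c * P / D^2 + W * Q / D"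
          by (rule alg_hom[OF D0 Y0 W0 W2 _ Q2 tY PK K0 KW Pc]) (simp add: Q_def)
        hence "lam \<bullet> x \<le> \<beta> \<bullet> y" using by_ unfolding t_def by simp
        moreover have "a \<bullet> lam + d \<bullet> \<beta> \<le> 0" using bd unfolding c_def by simp
        ultimately show ?thesis unfolding G_set_def using b1 by blast
      qed
    qed
  qed
qed

lemma C_G_mem: "z \<in> C_G lam G \<longleftrightarrow> (\<forall>\<beta>\<in>G. \<beta> \<bullet> snd z \<le> lam \<bullet> fst z)"
  unfolding C_G_def by (cases z) auto

lemma C_G_convex: "convex (C_G lam G)"
proof (rule convexI)
  fix x y and u v :: real
  assume x: "x \<in> C_G lam G" and y: "y \<in> C_G lam G" and "0 \<le> u" "0 \<le> v" "u + v = 1"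
  hence uv: "0 \<le> u \<and> 0 \<le> v \<and> u + v = 1" by simp
  show "u *\<^sub>R x + v *\<^sub>R y \<in> C_G lam G" unfolding C_G_mem
  proof
    fix \<beta> assume b: "\<beta> \<in> G"
    have "u * (\<beta> \<bullet> snd x) \<le> u * (lam \<bullet> fst x)" using x b uv unfolding C_G_mem by (simp add: mult_left_mono)
    moreover have "v * (\<beta> \<bullet> snd y) \<le> v * (lam \<bullet> fst y)" using y b uv unfolding C_G_mem by (simp add: mult_left_mono)
    ultimately show "\<beta> \<bullet> snd (u *\<^sub>R x + v *\<^sub>R y) \<le> lam \<bullet> fst (u *\<^sub>R x + v *\<^sub>R y)"
      by (simp add: inner_add_right)
  qed
qed

lemma C_G_cone: "z \<in> C_G lam G \<Longrightarrow> k \<ge> 0 \<Longrightarrow> k *\<^sub>R z \<in> C_G lam G"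
  unfolding C_G_mem by (simp add: mult_left_mono)

lemma C_G_interior:
  fixes lam x :: "real^'n" and y :: "real^'m"
  assumes lam1: "norm lam = 1" and G1: "\<forall>\<beta>\<in>G. norm \<beta> = 1" and eta: "\<eta> > 0"
    and H: "\<forall>\<beta>\<in>G. \<beta> \<bullet> y - lam \<bullet> x \<le> - \<eta>"
  shows "(x, y) \<in> interior (C_G lam G)"
  unfolding mem_interior
proof (intro exI conjI)
  show "\<eta>/2 > 0" using eta by simp
  show "ball (x, y) (\<eta>/2) \<subseteq> C_G lam G"
  proof
    fix z assume z: "z \<in> ball (x, y) (\<eta>/2)"
    have d1: "norm (fst z - x) < \<eta>/2" using z dist_fst_le[of "(x,y)" z]
      by (simp add: dist_norm norm_minus_commute)
    have d2: "norm (snd z - y) < \<eta>/2" using z dist_snd_le[of "(x,y)" z]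
      by (simp add: dist_norm norm_minus_commute)
    show "z \<in> C_G lam G" unfolding C_G_mem
    proof
      fix \<beta> assume b: "\<beta> \<in> G"
      have "\<beta> \<bullet> (snd z - y) \<le> norm (snd z - y)" using Cauchy_Schwarz_ineq2[of \<beta> "snd z - y"] G1 b by simp
      moreover have "- (lam \<bullet> (fst z - x)) \<le> norm (fst z - x)" using Cauchy_Schwarz_ineq2[of lam "fst z - x"] lam1 by simp
      moreover have "\<beta> \<bullet> snd z - lam \<bullet> fst z = (\<beta> \<bullet> y - lam \<bullet> x) + \<beta> \<bullet> (snd z - y) - lam \<bullet> (fst z - x)"
        by (simp add: inner_diff_right)
      ultimately show "\<beta> \<bullet> snd z \<le> lam \<bullet> fst z" using H b d1 d2 by fastforce
    qed
  qed
qed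

theorem proposition3:
  fixes a :: "real^'n" and d :: "real^'m" and xb :: "real^'n" and yb :: "real^'m"
  assumes "CARD('m) \<ge> 2"
    and "norm d \<ge> norm a"
    and "(xb, yb) \<notin> S_le0 a d"
    and "a \<bullet> xb + d \<bullet> yb \<le> 0"
  shows "maximal_S_free (S_le0 a d) (C_G (xb /\<^sub>R norm xb) (G_set a d (xb /\<^sub>R norm xb)))
       \<and> (xb, yb) \<in> interior (C_G (xb /\<^sub>R norm xb) (G_set a d (xb /\<^sub>R norm xb)))"
proof -
  note m2 = assms(1) and da = assms(2)
  define lam where "lam = xb /\<^sub>R norm xb"
  define G where "G = G_set a d lam"
  define C where "C = C_G lam G"
  define S where "S = S_le0 a d"
  have xy: "norm xb > norm yb" using assms(3,4) unfolding S_le0_def by auto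
  hence xb0: "xb \<noteq> 0" by auto
  have lam1: "norm lam = 1" unfolding lam_def using xb0 by simp
  have lamx: "lam \<bullet> xb = norm xb" unfolding lam_def using xb0
    by (simp add: dot_square_norm power2_eq_square)
  have G1: "\<forall>\<beta>\<in>G. norm \<beta> = 1" unfolding G_def G_set_def by simp
  have int: "(xb, yb) \<in> interior C" unfolding C_def
  proof (rule C_G_interior[OF lam1 G1, of "norm xb - norm yb"])
    show "norm xb - norm yb > 0" using xy by simp
    show "\<forall>\<beta>\<in>G. \<beta> \<bullet> yb - lam \<bullet> xb \<le> - (norm xb - norm yb)"
    proof
      fix \<beta> assume "\<beta> \<in> G"
      hence "\<beta> \<bullet> yb \<le> norm yb" using G1 Cauchy_Schwarz_ineq2[of \<beta> yb] by auto
      thus "\<beta> \<bullet> yb - lam \<bullet> xb \<le> - (norm xb - norm yb)" using lamx by simp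
    qed
  qed
  have free: "S_free S C"
    unfolding S_free_def
  proof
    show "convex C" unfolding C_def by (rule C_G_convex)
    show "interior C \<inter> S = {}"
    proof (rule ccontr)
      assume "interior C \<inter> S \<noteq> {}"
      then obtain x y where xyi: "(x, y) \<in> interior C" and xyS: "(x, y) \<in> S" by auto
      obtain \<epsilon> where e0: "\<epsilon> > 0" and eb: "ball (x, y) \<epsilon> \<subseteq> C" using xyi mem_interior by blast
      have "norm x \<le> norm y" "a \<bullet> x + d \<bullet> y \<le> 0" using xyS unfolding S_def S_le0_def by auto
      then obtain \<beta> where bG: "\<beta> \<in> G" and bxy: "lam \<bullet> x \<le> \<beta> \<bullet> y"
        using exists_beta[OF m2 lam1 da] unfolding G_def by blast
      have "(x, y + (\<epsilon>/2) *\<^sub>R \<beta>) \<in> ball (x, y) \<epsilon>"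
        using G1 bG e0 by (simp add: dist_Pair_Pair dist_norm)
      hence "(x, y + (\<epsilon>/2) *\<^sub>R \<beta>) \<in> C" using eb by blast
      hence "\<beta> \<bullet> (y + (\<epsilon>/2) *\<^sub>R \<beta>) \<le> lam \<bullet> x" using bG unfolding C_def C_G_mem by auto
      moreover have "\<beta> \<bullet> \<beta> = 1" using G1 bG by (simp add: dot_square_norm)
      ultimately have "\<beta> \<bullet> y + \<epsilon>/2 \<le> lam \<bullet> x" by (simp add: inner_add_right)
      thus False using bxy e0 by linarith
    qed
  qed
  have maxi: "\<forall>C'. S_free S C' \<and> C \<subseteq> C' \<longrightarrow> C' = C"
  proof (intro allI impI)
    fix C' assume H: "S_free S C' \<and> C \<subseteq> C'"
    hence cvx: "convex C'" and dis: "interior C' \<inter> S = {}" and sub: "C \<subseteq> C'"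
      unfolding S_free_def by auto
    show "C' = C"
    proof (rule ccontr)
      assume "C' \<noteq> C"
      then obtain z where zC': "z \<in> C'" and zC: "z \<notin> C" using sub by blast
      obtain zx zy where zeq: "z = (zx, zy)" by (cases z)
      obtain \<beta>0 where b0G: "\<beta>0 \<in> G" and viol: "\<beta>0 \<bullet> zy > lam \<bullet> zx"
        using zC unfolding C_def C_G_mem zeq by auto
      define \<delta> where "\<delta> = \<beta>0 \<bullet> zy - lam \<bullet> zx"
      have d0: "\<delta> > 0" unfolding \<delta>_def using viol by simp
      define \<theta> where "\<theta> = min (1/2) (\<delta> / (norm zy ^2 + 1))"
      have th0: "\<theta> > 0" unfolding \<theta>_def using d0 by (simp add: add_pos_nonneg divide_pos_pos add_nonneg_pos)
      have th1: "\<theta> \<le> 1/2" unfolding \<theta>_def by (rule min.cobounded1)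
      have th2: "\<theta> * norm zy ^2 \<le> \<delta>"
      proof -
        have "\<theta> \<le> \<delta> / (norm zy ^2 + 1)" unfolding \<theta>_def by simp
        moreover have pz: "norm zy ^2 + 1 > 0" by (simp add: add_nonneg_pos)
        ultimately have "\<theta> * (norm zy ^2 + 1) \<le> \<delta>" using pos_le_divide_eq[OF pz] by blast
        thus ?thesis using th0 by (simp add: algebra_simps)
      qed
      have b01: "norm \<beta>0 = 1" using G1 b0G by simp
      define q where "q = (lam - \<theta> *\<^sub>R zx, \<beta>0 - \<theta> *\<^sub>R zy)"
      have qint: "q \<in> interior C" unfolding q_def C_def
      proof (rule C_G_interior[OF lam1 G1, of "\<theta> * \<delta> / 2"])
        show "\<theta> * \<delta> / 2 > 0" using th0 d0 by simp
        show "\<forall>\<beta>\<in>G. \<beta> \<bullet> (\<beta>0 - \<theta> *\<^sub>R zy) - lam \<bullet> (lam - \<theta> *\<^sub>R zx) \<le> - (\<theta> * \<delta> / 2)"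
        proof
          fix \<beta> assume bG: "\<beta> \<in> G"
          define e where "e = \<beta> - \<beta>0"
          have b1: "norm \<beta> = 1" using G1 bG by simp
          have bb0: "\<beta> \<bullet> \<beta>0 = 1 - norm e ^2 / 2"
          proof -
            have "norm e ^2 = \<beta> \<bullet> \<beta> - 2 * (\<beta> \<bullet> \<beta>0) + \<beta>0 \<bullet> \<beta>0" unfolding e_def
              by (simp add: power2_norm_eq_inner inner_diff_left inner_diff_right inner_commute)
            thus ?thesis using b1 b01 by (simp add: dot_square_norm field_simps)
          qed
          have ll: "lam \<bullet> lam = 1" using lam1 by (simp add: dot_square_norm)
          have eq: "\<beta> \<bullet> (\<beta>0 - \<theta> *\<^sub>R zy) - lam \<bullet> (lam - \<theta> *\<^sub>R zx)
                = - (norm e ^2 / 2) - \<theta> * \<delta> - \<theta> * (e \<bullet> zy)"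
            unfolding \<delta>_def using bb0 ll unfolding e_def
            by (simp add: inner_diff_right inner_diff_left algebra_simps)
          have cs: "- (e \<bullet> zy) \<le> norm e * norm zy" using Cauchy_Schwarz_ineq2[of e zy] by linarith
          have amgm: "\<theta> * (norm e * norm zy) \<le> norm e ^2 / 2 + (\<theta> * norm zy)^2 / 2"
          proof -
            have "0 \<le> (norm e - \<theta> * norm zy)^2" by simp
            thus ?thesis by (simp add: power2_eq_square algebra_simps)
          qed
          have "(\<theta> * norm zy)^2 \<le> \<theta> * \<delta>"
          proof -
            have "(\<theta> * norm zy)^2 = \<theta> * (\<theta> * norm zy ^2)" by (simp add: power2_eq_square)
            also have "\<dots> \<le> \<theta> * \<delta>" using th2 th0 by (simp add: mult_left_mono)
            finally show ?thesis .
          qed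
          moreover have "- \<theta> * (e \<bullet> zy) \<le> \<theta> * (norm e * norm zy)"
            using mult_left_mono[OF cs, of \<theta>] th0 by simp
          ultimately show "\<beta> \<bullet> (\<beta>0 - \<theta> *\<^sub>R zy) - lam \<bullet> (lam - \<theta> *\<^sub>R zx) \<le> - (\<theta> * \<delta> / 2)"
            unfolding eq using amgm by linarith
        qed
      qed
      obtain \<epsilon> where e0: "\<epsilon> > 0" and eb: "ball q \<epsilon> \<subseteq> C" using qint mem_interior by blast
      define p where "p = (lam, \<beta>0)"
      have pS: "p \<in> S" unfolding p_def S_def S_le0_def using lam1 b01 b0G unfolding G_def G_set_def by simp
      have "ball p \<epsilon> \<subseteq> C'"
      proof
        fix w assume w: "w \<in> ball p \<epsilon>"
        have "w - \<theta> *\<^sub>R z \<in> ball q \<epsilon>"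
        proof -
          have "q = p - \<theta> *\<^sub>R z" unfolding q_def p_def zeq by simp
          hence "dist q (w - \<theta> *\<^sub>R z) = dist p w" by (simp add: dist_norm algebra_simps)
          thus ?thesis using w by simp
        qed
        hence wC: "w - \<theta> *\<^sub>R z \<in> C" using eb by blast
        define c' where "c' = (1 / (1 - \<theta>)) *\<^sub>R (w - \<theta> *\<^sub>R z)"
        have "c' \<in> C" unfolding c'_def C_def using wC th1 unfolding C_def by (intro C_G_cone) auto
        hence c'C': "c' \<in> C'" using sub by blast
        have "\<theta> *\<^sub>R z + (1 - \<theta>) *\<^sub>R c' \<in> C'"
          using cvx zC' c'C' th0 th1 unfolding convex_def by auto
        moreover have "\<theta> *\<^sub>R z + (1 - \<theta>) *\<^sub>R c' = w" unfolding c'_def using th1 by simp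
        ultimately show "w \<in> C'" by simp
      qed
      hence "p \<in> interior C'" using e0 mem_interior by blast
      thus False using pS dis by blast
    qed
  qed
  show ?thesis using free maxi int unfolding maximal_S_free_def C_def G_def S_def lam_def by blast
qed

end
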